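(* Let $V$ be a real sequence and suppose that for some $a>1$, $b>1$, the equation $(-\Delta+V)\psi=0$ has a solution $\psi^-$ with $a^{n^b}\psi^-_n\to1$ as $n\to\infty$. Then: (i) every solution $\psi$ linearly independent of $\psi^-$ increases rapidly as $n\to\infty$, but $a^{-n^b}\psi_n\to0$; (ii) for any solution $\psi$, the product $\psi_n\psi^-_n$ is bounded independently of $n$; (iii) given any boundary condition $c\psi_1+d\psi_2=0$, if $0\notin\mathrm{sp}(-\Delta+V)$, then the Green matrix of $-\Delta+V$ on $n\ge1$ is uniformly bounded.
   Context: $(\Delta f)_n=f_{n+1}+f_{n-1}-2f_n$; $(-\Delta+V)\psi=0$ means $-\psi_{n+1}-\psi_{n-1}+(2+V_n)\psi_n=0$ for $n\ge1$. The Green matrix with the given boundary condition is $G_{mn}=\psi^+_{\min(m,n)}\psi^-_{\max(m,n)}/W$, where $\psi^+$ satisfies the boundary condition and $W=\psi^-_n\psi^+_{n+1}-\psi^-_{n+1}\psi^+_n$. *)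

theory Defs
  imports "HOL-Analysis.Analysis"
begin

text \<open>Sequences are functions nat => real; the equation (-Delta+V) psi = 0 is imposed
  for n >= 1 (so it involves psi 0), as in the paper's context.\<close>

definition schr_op :: "(nat \<Rightarrow> real) \<Rightarrow> (nat \<Rightarrow> real) \<Rightarrow> nat \<Rightarrow> real" where
  "schr_op V f n = - f (n + 1) - f (n - 1) + (2 + V n) * f n"

definition is_solution :: "(nat \<Rightarrow> real) \<Rightarrow> (nat \<Rightarrow> real) \<Rightarrow> bool" where
  "is_solution V \<psi> \<longleftrightarrow> (\<forall>n\<ge>1. schr_op V \<psi> n = 0)"

text \<open>Wronskian W = psi^-_n psi^+_(n+1) - psi^-_(n+1) psi^+_n (constant in n for solutions;
  evaluated at n = 1) and the Green matrix G_mn = psi^+_min(m,n) psi^-_max(m,n) / W.\<close>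

definition wronskian :: "(nat \<Rightarrow> real) \<Rightarrow> (nat \<Rightarrow> real) \<Rightarrow> real" where
  "wronskian \<psi>m \<psi>p = \<psi>m 1 * \<psi>p 2 - \<psi>m 2 * \<psi>p 1"

definition green_matrix :: "(nat \<Rightarrow> real) \<Rightarrow> (nat \<Rightarrow> real) \<Rightarrow> nat \<Rightarrow> nat \<Rightarrow> real" where
  "green_matrix \<psi>p \<psi>m m n = \<psi>p (min m n) * \<psi>m (max m n) / wronskian \<psi>m \<psi>p"

definition l2_half :: "(nat \<Rightarrow> real) \<Rightarrow> bool" where
  "l2_half f \<longleftrightarrow> summable (\<lambda>n. (f (n + 1))\<^sup>2)"

definition l2_normsq :: "(nat \<Rightarrow> real) \<Rightarrow> real" where
  "l2_normsq f = (\<Sum>n. (f (n + 1))\<^sup>2)"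

text \<open>Boundary condition c psi_1 + d psi_2 = 0, imposed on a domain element f
  with psi_2 replaced by the value the homogeneous recursion at n = 1 gives,
  (2 + V 1) f 1 - f 0.  For solutions of the homogeneous equation this is exactly
  c psi 1 + d psi 2 = 0.\<close>

definition bc_holds :: "(nat \<Rightarrow> real) \<Rightarrow> real \<Rightarrow> real \<Rightarrow> (nat \<Rightarrow> real) \<Rightarrow> bool" where
  "bc_holds V c d f \<longleftrightarrow> c * f 1 + d * ((2 + V 1) * f 1 - f 0) = 0"

text \<open>0 is not in the spectrum of the half-line operator -Delta+V on l2(n>=1) with this
  boundary condition: the operator is injective, surjective onto l2, with bounded inverse.\<close>

definition zero_notin_spectrum :: "(nat \<Rightarrow> real) \<Rightarrow> real \<Rightarrow> real \<Rightarrow> bool" where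
  "zero_notin_spectrum V c d \<longleftrightarrow>
     (\<forall>f. l2_half f \<and> bc_holds V c d f \<and> (\<forall>n\<ge>1. schr_op V f n = 0) \<longrightarrow> (\<forall>n\<ge>1. f n = 0)) \<and>
     (\<exists>C. \<forall>g. l2_half g \<longrightarrow>
        (\<exists>f. l2_half f \<and> bc_holds V c d f \<and> (\<forall>n\<ge>1. schr_op V f n = g n) \<and>
             l2_normsq f \<le> C * l2_normsq g))"

end

theory Submission
  imports Defs "HOL-Real_Asymp.Real_Asymp"
begin


locale c3 =
  fixes V \<psi>m :: "nat \<Rightarrow> real" and a b :: real
  assumes a1: "a > 1" and b1: "b > 1"
    and solm: "is_solution V \<psi>m"
    and limm: "(\<lambda>n. a powr (real n powr b) * \<psi>m n) \<longlonglongrightarrow> 1"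
begin

definition e :: "nat \<Rightarrow> real" where "e n = a powr (real n powr b)"
definition q :: "nat \<Rightarrow> real" where "q n = a powr (real n powr (b-1))"
definition u :: "nat \<Rightarrow> real" where "u n = e n * \<psi>m n"

lemma e_pos: "e n > 0" using a1 by (simp add: e_def)
lemma e_ge1: "e n \<ge> 1" using a1 unfolding e_def by (intro ge_one_powr_ge_zero) auto
lemma e_mono: "m \<le> n \<Longrightarrow> e m \<le> e n"
  unfolding e_def using a1 b1 by (intro powr_mono powr_mono2) auto
lemma q_pos: "q n > 0" using a1 by (simp add: q_def)

lemma q_lim: "filterlim q at_top sequentially"
  unfolding q_def using a1 b1 by real_asymp

lemma u_lim: "u \<longlonglongrightarrow> 1"
proof -
  have "u = (\<lambda>n. a powr (real n powr b) * \<psi>m n)" by (simp add: fun_eq_iff u_def e_def)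
  then show ?thesis using limm by simp
qed

lemma pow_split: "real n powr b = real n powr (b-1) * real n"
proof (cases "n = 0")
  case False
  then have "real n * real n powr (b-1) = real n powr (1 + (b-1))"
    by (intro powr_mult_base) auto
  then show ?thesis by (simp add: mult.commute)
qed (use b1 in simp)

lemma h_bound: "e n / e (Suc n) \<le> 1 / q n"
proof -
  have key: "real n powr b + real n powr (b-1) \<le> real (Suc n) powr b"
  proof (cases "n = 0")
    case True then show ?thesis using b1 by simp
  next
    case False
    have "real (Suc n) powr b = real (Suc n) powr (b-1) * real (Suc n)"
      using pow_split[of "Suc n"] .
    also have "\<dots> \<ge> real n powr (b-1) * real (Suc n)"
      using b1 by (intro mult_right_mono powr_mono2) auto
    finally show ?thesis using pow_split[of n] by (simp add: algebra_simps)
  qed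
  have "e n / e (Suc n) = a powr (real n powr b - real (Suc n) powr b)"
    by (simp add: e_def powr_diff)
  also have "\<dots> \<le> a powr (- (real n powr (b-1)))"
    using a1 key by (intro powr_mono) auto
  also have "\<dots> = 1 / q n" by (simp add: q_def powr_minus_divide)
  finally show ?thesis .
qed

lemma h_lim: "(\<lambda>n. e n / e (Suc n)) \<longlonglongrightarrow> 0"
proof (rule Lim_null_comparison)
  show "\<forall>\<^sub>F n in sequentially. norm (e n / e (Suc n)) \<le> 1 / q n"
    using h_bound e_pos by (simp add: less_imp_le)
  show "(\<lambda>n. 1 / q n) \<longlonglongrightarrow> 0"
    using tendsto_inverse_0_at_top[OF q_lim] by (simp add: divide_inverse)
qed

lemma e_over_pow:
  assumes C: "C > 0"
  shows "filterlim (\<lambda>n. e n / C ^ n) at_top sequentially"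
proof -
  have eq: "e n = q n ^ n" for n
  proof -
    have "e n = (a powr (real n powr (b-1))) powr real n"
      by (simp add: e_def powr_powr pow_split[of n])
    also have "\<dots> = q n ^ n" using a1 by (simp add: q_def powr_realpow)
    finally show ?thesis .
  qed
  have ev: "\<forall>\<^sub>F n in sequentially. 2 * C \<le> q n"
    using q_lim by (simp add: filterlim_at_top)
  have lim2: "filterlim (\<lambda>n::nat. (2::real) ^ n) at_top sequentially" by real_asymp
  show ?thesis
  proof (rule filterlim_at_top_mono[OF lim2])
    show "\<forall>\<^sub>F n in sequentially. 2 ^ n \<le> e n / C ^ n"
      using ev
    proof eventually_elim
      case (elim n)
      have "2 \<le> q n / C" using elim C by (simp add: field_simps)
      then have "2 ^ n \<le> (q n / C) ^ n" by (intro power_mono) auto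
      also have "\<dots> = e n / C ^ n" by (simp add: eq power_divide)
      finally show ?case .
    qed
  qed
qed

lemma e_lim: "filterlim e at_top sequentially"
  using e_over_pow[of 1] by simp

lemma inv_e: "(\<lambda>n. 1 / e n) \<longlonglongrightarrow> 0"
  using tendsto_inverse_0_at_top[OF e_lim] by (simp add: divide_inverse)

end



lemma sol_step:
  assumes "is_solution V f"
  shows "f (Suc (Suc n)) = (2 + V (Suc n)) * f (Suc n) - f n"
  using assms unfolding is_solution_def schr_op_def
  by (auto dest!: spec[of _ "Suc n"] simp: algebra_simps)

lemma sol_zero:
  assumes s: "is_solution V f" and z: "f j = 0" "f (Suc j) = 0"
  shows "f n = 0"
proof -
  have up: "f (j + i) = 0 \<and> f (Suc (j + i)) = 0" for i
  proof (induction i)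
    case 0 then show ?case using z by simp
  next
    case (Suc i) then show ?case using sol_step[OF s, of "j+i"] by simp
  qed
  have down: "i \<le> j \<Longrightarrow> f (j - i) = 0 \<and> f (Suc (j - i)) = 0" for i
  proof (induction i)
    case 0 then show ?case using z by simp
  next
    case (Suc i)
    then have h: "f (j - i) = 0 \<and> f (Suc (j - i)) = 0" by simp
    define m where "m = j - Suc i"
    have ji: "j - i = Suc m" using Suc.prems by (simp add: m_def)
    have "f (Suc m) = 0" "f (Suc (Suc m)) = 0" using h ji by simp_all
    then have "f m = 0" using sol_step[OF s, of m] by simp
    then show ?case using ji h by (simp add: m_def[symmetric])
  qed
  show ?thesis
  proof (cases "j \<le> n")
    case True then show ?thesis using up[of "n - j"] by simp
  next
    case False then show ?thesis using down[of "j - n"] by simp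
  qed
qed

lemma wr_const:
  assumes s1: "is_solution V f" and s2: "is_solution V g"
  shows "f n * g (Suc n) - f (Suc n) * g n = wronskian f g"
proof -
  have step: "f (Suc n) * g (Suc (Suc n)) - f (Suc (Suc n)) * g (Suc n)
            = f n * g (Suc n) - f (Suc n) * g n" for n
    by (simp add: sol_step[OF s1] sol_step[OF s2] algebra_simps)
  have "f n * g (Suc n) - f (Suc n) * g n = f 0 * g 1 - f 1 * g 0" for n
    by (induction n) (use step in auto)
  moreover have "wronskian f g = f 0 * g 1 - f 1 * g 0"
    using step[of 0] by (simp add: wronskian_def numeral_2_eq_2)
  ultimately show ?thesis by simp
qed

context c3 begin

definition N :: nat where
  "N = (SOME N. \<forall>n\<ge>N. 1/2 \<le> \<bar>u n\<bar> \<and> \<bar>u n\<bar> \<le> 2 \<and> e n / e (Suc n) \<le> 1/4)"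

lemma N_prop: "n \<ge> N \<Longrightarrow> 1/2 \<le> \<bar>u n\<bar> \<and> \<bar>u n\<bar> \<le> 2 \<and> e n / e (Suc n) \<le> 1/4"
proof -
  have ev1: "\<forall>\<^sub>F n in sequentially. dist (u n) 1 < 1/2"
    using tendsto_iff[THEN iffD1, rule_format, OF u_lim, of "1/2"] by simp
  have ev2: "\<forall>\<^sub>F n in sequentially. e n / e (Suc n) < 1/4"
    using order_tendstoD(2)[OF h_lim, of "1/4"] by simp
  have "\<forall>\<^sub>F n in sequentially. 1/2 \<le> \<bar>u n\<bar> \<and> \<bar>u n\<bar> \<le> 2 \<and> e n / e (Suc n) \<le> 1/4"
    using ev1 ev2 by eventually_elim (auto simp: dist_real_def abs_if split: if_splits)
  then have "\<exists>N. \<forall>n\<ge>N. 1/2 \<le> \<bar>u n\<bar> \<and> \<bar>u n\<bar> \<le> 2 \<and> e n / e (Suc n) \<le> 1/4"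
    by (simp add: eventually_sequentially)
  from someI_ex[OF this] show "n \<ge> N \<Longrightarrow> ?thesis" unfolding N_def by blast
qed

lemma e4: "n \<ge> N \<Longrightarrow> 4 * e n \<le> e (Suc n)"
  using N_prop[of n] e_pos[of "Suc n"] by (simp add: field_simps)

lemma psim_eq: "\<psi>m n = u n / e n" using e_pos[of n] by (simp add: u_def)

lemma psim_nz: "n \<ge> N \<Longrightarrow> \<psi>m n \<noteq> 0"
  using N_prop[of n] by (auto simp: u_def)

lemma inv_psim: "n \<ge> N \<Longrightarrow> 1 / \<bar>\<psi>m n\<bar> \<le> 2 * e n"
proof -
  assume n: "n \<ge> N"
  have "\<bar>\<psi>m n\<bar> = \<bar>u n\<bar> / e n" using e_pos[of n] by (simp add: psim_eq)
  then have "\<bar>\<psi>m n\<bar> * (2 * e n) = 2 * \<bar>u n\<bar>" using e_pos[of n] by simp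
  also have "\<dots> \<ge> 1" using N_prop[OF n] by simp
  finally show ?thesis using psim_nz[OF n] by (simp add: divide_le_eq mult.commute)
qed

end



context c3 begin

definition r :: "(nat \<Rightarrow> real) \<Rightarrow> nat \<Rightarrow> real" where "r f n = f n / \<psi>m n"

context
  fixes \<psi> :: "nat \<Rightarrow> real"
  assumes sol: "is_solution V \<psi>"
begin

lemma r_step: "n \<ge> N \<Longrightarrow> r \<psi> (Suc n) - r \<psi> n = wronskian \<psi>m \<psi> / (\<psi>m n * \<psi>m (Suc n))"
proof -
  assume n: "n \<ge> N"
  have nz: "\<psi>m n \<noteq> 0" "\<psi>m (Suc n) \<noteq> 0" using psim_nz n by auto
  have w: "\<psi>m n * \<psi> (Suc n) - \<psi>m (Suc n) * \<psi> n = wronskian \<psi>m \<psi>"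
    using wr_const[OF solm sol] .
  show ?thesis unfolding r_def using nz w[symmetric] by (simp add: field_simps)
qed

lemma r_incr: "n \<ge> N \<Longrightarrow> \<bar>r \<psi> (Suc n) - r \<psi> n\<bar> \<le> 4 * \<bar>wronskian \<psi>m \<psi>\<bar> * e n * e (Suc n)"
proof -
  assume n: "n \<ge> N"
  let ?W = "\<bar>wronskian \<psi>m \<psi>\<bar>"
  have "\<bar>r \<psi> (Suc n) - r \<psi> n\<bar> = ?W * (1 / \<bar>\<psi>m n\<bar>) * (1 / \<bar>\<psi>m (Suc n)\<bar>)"
    using r_step[OF n] by (simp add: abs_mult)
  also have "\<dots> \<le> ?W * (2 * e n) * (2 * e (Suc n))"
    using inv_psim[OF n] inv_psim[of "Suc n"] n e_pos[of n]
    by (intro mult_mono) (auto intro: mult_left_mono simp: less_imp_le)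
  finally show ?thesis by (simp add: algebra_simps)
qed

lemma r_bound: "n \<ge> N \<Longrightarrow> \<bar>r \<psi> (Suc n)\<bar> \<le> \<bar>r \<psi> (Suc N)\<bar> + 8 * \<bar>wronskian \<psi>m \<psi>\<bar> * e n * e (Suc n)"
proof (induction n rule: dec_induct)
  case base then show ?case using e_pos[of N] e_pos[of "Suc N"] by simp
next
  case (step n)
  let ?W = "\<bar>wronskian \<psi>m \<psi>\<bar>"
  let ?R = "\<bar>r \<psi> (Suc N)\<bar>"
  have "\<bar>r \<psi> (Suc (Suc n))\<bar> \<le> \<bar>r \<psi> (Suc n)\<bar> + \<bar>r \<psi> (Suc (Suc n)) - r \<psi> (Suc n)\<bar>" by simp
  also have "\<dots> \<le> ?R + 8 * ?W * e n * e (Suc n) + 4 * ?W * e (Suc n) * e (Suc (Suc n))"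
    using step.IH r_incr[of "Suc n"] step.hyps by simp
  also have "8 * ?W * e n * e (Suc n) \<le> 4 * ?W * e (Suc n) * e (Suc (Suc n))"
  proof -
    have "4 * e n \<le> e (Suc n)" using e4 step.hyps by simp
    also have "\<dots> \<le> e (Suc (Suc n))" by (simp add: e_mono)
    finally have "8 * e n * e (Suc n) \<le> 2 * e (Suc n) * e (Suc (Suc n))"
      using e_pos[of "Suc n"] by (simp add: mult_right_mono)
    also have "\<dots> \<le> 4 * e (Suc n) * e (Suc (Suc n))"
      using e_pos[of "Suc n"] e_pos[of "Suc (Suc n)"] by simp
    finally have X: "8 * e n * e (Suc n) \<le> 4 * e (Suc n) * e (Suc (Suc n))" .
    have "?W * (8 * e n * e (Suc n)) \<le> ?W * (4 * e (Suc n) * e (Suc (Suc n)))"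
      using X by (rule mult_left_mono) simp
    then show ?thesis by (simp add: algebra_simps)
  qed
  finally show ?case by simp
qed

definition gb :: "nat \<Rightarrow> real" where
  "gb n = 2 * \<bar>r \<psi> (Suc N)\<bar> * (1 / e (Suc n)) + 16 * \<bar>wronskian \<psi>m \<psi>\<bar> * (e n / e (Suc n))"

lemma gb_lim: "gb \<longlonglongrightarrow> 0"
proof -
  have "(\<lambda>n. 2 * \<bar>r \<psi> (Suc N)\<bar> * (1 / e (Suc n)) + 16 * \<bar>wronskian \<psi>m \<psi>\<bar> * (e n / e (Suc n))) \<longlonglongrightarrow> 0"
    by (intro tendsto_add_zero tendsto_mult_right_zero h_lim LIMSEQ_Suc[OF inv_e])
  then show ?thesis by (simp add: gb_def[abs_def])
qed

lemma psi_e_lim: "(\<lambda>n. \<psi> n / e n) \<longlonglongrightarrow> 0"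
proof -
  let ?W = "\<bar>wronskian \<psi>m \<psi>\<bar>"
  let ?R = "\<bar>r \<psi> (Suc N)\<bar>"
  have "(\<lambda>n. \<psi> (Suc n) / e (Suc n)) \<longlonglongrightarrow> 0"
  proof (rule Lim_null_comparison[OF _ gb_lim])
    show "\<forall>\<^sub>F n in sequentially. norm (\<psi> (Suc n) / e (Suc n)) \<le> gb n"
      unfolding eventually_sequentially
    proof (intro exI allI impI)
      fix n assume n: "n \<ge> N"
      define E where "E = e (Suc n)"
      have E1: "E \<ge> 1" using e_ge1 by (simp add: E_def)
      have en: "e n \<le> E" unfolding E_def by (simp add: e_mono)
      have nz: "\<psi>m (Suc n) \<noteq> 0" using psim_nz n by simp
      have eq: "\<psi> (Suc n) / E = u (Suc n) * r \<psi> (Suc n) / E^2"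
        using nz E1 by (simp add: r_def u_def E_def power2_eq_square field_simps)
      have ub: "\<bar>u (Suc n)\<bar> \<le> 2" using N_prop[of "Suc n"] n by simp
      have rb: "\<bar>r \<psi> (Suc n)\<bar> \<le> ?R + 8 * ?W * e n * E" using r_bound[OF n] by (simp add: E_def)
      have "\<bar>u (Suc n) * r \<psi> (Suc n)\<bar> \<le> 2 * (?R + 8 * ?W * e n * E)"
        unfolding abs_mult using ub rb by (intro mult_mono) auto
      then have "\<bar>\<psi> (Suc n) / E\<bar> \<le> 2 * (?R + 8 * ?W * e n * E) / E^2"
        unfolding eq abs_divide using E1 by (simp add: divide_right_mono)
      also have "\<dots> = 2 * ?R / E^2 + 16 * ?W * (e n / E)"
        using E1 by (simp add: field_simps power2_eq_square)
      also have "2 * ?R / E^2 \<le> 2 * ?R / E"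
        using E1 by (intro divide_left_mono) (auto simp: power2_eq_square)
      finally show "norm (\<psi> (Suc n) / e (Suc n)) \<le> gb n"
        by (simp add: gb_def E_def)
    qed
  qed
  then show ?thesis using filterlim_sequentially_Suc[of "\<lambda>n. \<psi> n / e n" "nhds 0"] by simp
qed

lemma psi_next_lim: "(\<lambda>n. \<psi> (Suc n) / e n) \<longlonglongrightarrow> wronskian \<psi>m \<psi>"
proof -
  let ?W = "\<bar>wronskian \<psi>m \<psi>\<bar>"
  let ?R = "\<bar>r \<psi> (Suc N)\<bar>"
  define A where "A n = u (Suc (Suc n)) * r \<psi> (Suc n) / (e (Suc n) * e (Suc (Suc n)))" for n
  have A0: "A \<longlonglongrightarrow> 0"
  proof (rule Lim_null_comparison[OF _ gb_lim])
    show "\<forall>\<^sub>F n in sequentially. norm (A n) \<le> gb n"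
      unfolding eventually_sequentially
    proof (intro exI allI impI)
      fix n assume n: "n \<ge> N"
      define E where "E = e (Suc n)"
      define E2 where "E2 = e (Suc (Suc n))"
      have E1: "E \<ge> 1" using e_ge1 by (simp add: E_def)
      have E12: "E \<le> E2" unfolding E_def E2_def by (simp add: e_mono)
      have ub: "\<bar>u (Suc (Suc n))\<bar> \<le> 2" using N_prop[of "Suc (Suc n)"] n by simp
      have rb: "\<bar>r \<psi> (Suc n)\<bar> \<le> ?R + 8 * ?W * e n * E" using r_bound[OF n] by (simp add: E_def)
      have "\<bar>u (Suc (Suc n)) * r \<psi> (Suc n)\<bar> \<le> 2 * (?R + 8 * ?W * e n * E)"
        unfolding abs_mult using ub rb by (intro mult_mono) auto
      then have "\<bar>A n\<bar> \<le> 2 * (?R + 8 * ?W * e n * E) / (E * E2)"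
        unfolding A_def abs_divide E_def[symmetric] E2_def[symmetric] using E1 E12
        by (simp add: divide_right_mono)
      also have "\<dots> = 2 * ?R / (E * E2) + 16 * ?W * (e n / E2)"
        using E1 E12 by (simp add: field_simps)
      also have "2 * ?R / (E * E2) \<le> 2 * ?R / E"
      proof -
        have "E * 1 \<le> E * E2" using E1 E12 by (intro mult_left_mono) auto
        then show ?thesis using E1 by (intro divide_left_mono) auto
      qed
      also have "16 * ?W * (e n / E2) \<le> 16 * ?W * (e n / E)"
        using E1 E12 e_pos[of n] by (intro mult_left_mono divide_left_mono) auto
      finally show "norm (A n) \<le> gb n" by (simp add: gb_def E_def)
    qed
  qed
  have B: "(\<lambda>n. wronskian \<psi>m \<psi> / u (Suc n)) \<longlonglongrightarrow> wronskian \<psi>m \<psi> / 1"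
    by (intro tendsto_divide tendsto_const LIMSEQ_Suc[OF u_lim]) simp
  have "(\<lambda>n. A n + wronskian \<psi>m \<psi> / u (Suc n)) \<longlonglongrightarrow> 0 + wronskian \<psi>m \<psi> / 1"
    by (intro tendsto_add A0 B)
  then have "(\<lambda>n. A n + wronskian \<psi>m \<psi> / u (Suc n)) \<longlonglongrightarrow> wronskian \<psi>m \<psi>" by simp
  then have "(\<lambda>n. \<psi> (Suc (Suc n)) / e (Suc n)) \<longlonglongrightarrow> wronskian \<psi>m \<psi>"
  proof (rule Lim_transform_eventually)
    show "\<forall>\<^sub>F n in sequentially. A n + wronskian \<psi>m \<psi> / u (Suc n) = \<psi> (Suc (Suc n)) / e (Suc n)"
      unfolding eventually_sequentially
    proof (intro exI allI impI)
      fix n assume n: "n \<ge> N"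
      have nz1: "\<psi>m (Suc n) \<noteq> 0" and nz2: "\<psi>m (Suc (Suc n)) \<noteq> 0" using psim_nz n by auto
      have st: "r \<psi> (Suc (Suc n)) = r \<psi> (Suc n) + wronskian \<psi>m \<psi> / (\<psi>m (Suc n) * \<psi>m (Suc (Suc n)))"
        using r_step[of "Suc n"] n by simp
      have "\<psi> (Suc (Suc n)) = \<psi>m (Suc (Suc n)) * r \<psi> (Suc (Suc n))"
        using nz2 by (simp add: r_def)
      also have "\<dots> = \<psi>m (Suc (Suc n)) * r \<psi> (Suc n) + wronskian \<psi>m \<psi> / \<psi>m (Suc n)"
        using nz1 nz2 by (simp add: st field_simps)
      finally have "\<psi> (Suc (Suc n)) / e (Suc n) =
          \<psi>m (Suc (Suc n)) * r \<psi> (Suc n) / e (Suc n) + wronskian \<psi>m \<psi> / (\<psi>m (Suc n) * e (Suc n))"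
        by (simp add: add_divide_distrib)
      also have "\<dots> = A n + wronskian \<psi>m \<psi> / u (Suc n)"
        using e_pos[of "Suc n"] e_pos[of "Suc (Suc n)"]
        by (simp add: A_def u_def[of "Suc n"] psim_eq[of "Suc (Suc n)"] field_simps)
      finally show "A n + wronskian \<psi>m \<psi> / u (Suc n) = \<psi> (Suc (Suc n)) / e (Suc n)" by simp
    qed
  qed
  then show ?thesis using filterlim_sequentially_Suc[of "\<lambda>n. \<psi> (Suc n) / e n" "nhds (wronskian \<psi>m \<psi>)"] by simp
qed

end
end



context c3 begin

lemma prod_bound:
  assumes sol: "is_solution V f"
  shows "\<exists>K. \<forall>i j. i \<le> j \<longrightarrow> \<bar>f i * \<psi>m j\<bar> \<le> K"
proof -
  obtain K1 where K1p: "K1 > 0" and K1: "\<forall>n. norm (f n / e n) \<le> K1"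
    using convergent_imp_Bseq[OF convergentI[OF psi_e_lim[OF sol]]] BseqE by blast
  obtain K2 where K2p: "K2 > 0" and K2: "\<forall>n. norm (u n) \<le> K2"
    using convergent_imp_Bseq[OF convergentI[OF u_lim]] BseqE by blast
  have "\<bar>f i * \<psi>m j\<bar> \<le> K1 * K2" if ij: "i \<le> j" for i j
  proof -
    have eq: "f i * \<psi>m j = (f i / e i) * u j * (e i / e j)"
      using e_pos[of i] e_pos[of j] by (simp add: u_def field_simps)
    have r: "e i / e j \<le> 1" "0 \<le> e i / e j"
      using e_mono[OF ij] e_pos[of i] e_pos[of j] by (auto simp: less_imp_le)
    have "\<bar>f i * \<psi>m j\<bar> = \<bar>f i / e i\<bar> * \<bar>u j\<bar> * (e i / e j)"
      unfolding eq abs_mult abs_divide using r e_pos[of i] e_pos[of j] by simp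
    also have "\<dots> \<le> K1 * K2 * 1"
      using K1 K2 r K1p K2p by (intro mult_mono) auto
    finally show ?thesis by simp
  qed
  then show ?thesis by (intro exI[of _ "K1*K2"]) auto
qed

lemma W_nonzero:
  assumes sol: "is_solution V \<psi>"
    and ind: "\<forall>\<alpha> \<beta>. (\<forall>n. \<alpha> * \<psi> n + \<beta> * \<psi>m n = 0) \<longrightarrow> \<alpha> = 0 \<and> \<beta> = 0"
  shows "wronskian \<psi>m \<psi> \<noteq> 0"
proof
  assume W0: "wronskian \<psi>m \<psi> = 0"
  define k where "k = \<psi> N / \<psi>m N"
  define \<phi> where "\<phi> n = \<psi> n - k * \<psi>m n" for n
  have nz: "\<psi>m N \<noteq> 0" using psim_nz by simp
  have sphi: "is_solution V \<phi>"
    unfolding is_solution_def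
  proof (intro allI impI)
    fix n :: nat assume n: "n \<ge> 1"
    have "schr_op V \<phi> n = schr_op V \<psi> n - k * schr_op V \<psi>m n"
      by (simp add: schr_op_def \<phi>_def algebra_simps)
    then show "schr_op V \<phi> n = 0" using sol solm n by (simp add: is_solution_def)
  qed
  have p0: "\<phi> N = 0" using nz by (simp add: \<phi>_def k_def)
  have "\<psi>m N * \<psi> (Suc N) - \<psi>m (Suc N) * \<psi> N = 0"
    using wr_const[OF solm sol, of N] W0 by simp
  then have "\<psi>m N * \<phi> (Suc N) = 0" using nz by (simp add: \<phi>_def k_def field_simps)
  then have p1: "\<phi> (Suc N) = 0" using nz by simp
  have "\<forall>n. 1 * \<psi> n + (- k) * \<psi>m n = 0"
    using sol_zero[OF sphi p0 p1] by (simp add: \<phi>_def)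
  then show False using ind[rule_format, of 1 "-k"] by simp
qed

end



context c3 begin

lemma part_i:
  assumes sol: "is_solution V \<psi>"
    and ind: "\<forall>\<alpha> \<beta>. (\<forall>n. \<alpha> * \<psi> n + \<beta> * \<psi>m n = 0) \<longrightarrow> \<alpha> = 0 \<and> \<beta> = 0"
  shows "(eventually (\<lambda>n. \<bar>\<psi> n\<bar> < \<bar>\<psi> (Suc n)\<bar>) sequentially) \<and>
        (\<forall>C>0. filterlim (\<lambda>n. \<bar>\<psi> n\<bar> / C ^ n) at_top sequentially) \<and>
        (\<lambda>n. a powr (- (real n powr b)) * \<psi> n) \<longlonglongrightarrow> 0"
proof (intro conjI allI impI)
  define w where "w = \<bar>wronskian \<psi>m \<psi>\<bar>"
  have w0: "w > 0" using W_nonzero[OF sol ind] by (simp add: w_def)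
  have L: "(\<lambda>n. \<bar>\<psi> (Suc n) / e n\<bar>) \<longlonglongrightarrow> w"
    unfolding w_def by (intro tendsto_rabs psi_next_lim[OF sol])
  have eva: "\<forall>\<^sub>F n in sequentially. w / 2 < \<bar>\<psi> (Suc n) / e n\<bar>"
    using order_tendstoD(1)[OF L, of "w/2"] w0 by simp
  have evb: "\<forall>\<^sub>F n in sequentially. \<bar>\<psi> (Suc n) / e n\<bar> < 2 * w"
    using order_tendstoD(2)[OF L, of "2*w"] w0 by simp
  have eva': "\<forall>\<^sub>F n in sequentially. w / 2 < \<bar>\<psi> (Suc (Suc n)) / e (Suc n)\<bar>"
    using eva eventually_sequentially_Suc[of "\<lambda>n. w / 2 < \<bar>\<psi> (Suc n) / e n\<bar>"] by simp
  have evN: "\<forall>\<^sub>F n in sequentially. N \<le> n" by (simp add: eventually_ge_at_top)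
  have "\<forall>\<^sub>F n in sequentially. \<bar>\<psi> (Suc n)\<bar> < \<bar>\<psi> (Suc (Suc n))\<bar>"
    using eva' evb evN
  proof eventually_elim
    case (elim n)
    have p1: "e n > 0" "e (Suc n) > 0" using e_pos by auto
    have "\<bar>\<psi> (Suc n)\<bar> < 2 * w * e n" using elim(2) p1 by (simp add: abs_divide field_simps)
    also have "\<dots> = w / 2 * (4 * e n)" by simp
    also have "\<dots> \<le> w / 2 * e (Suc n)" using e4[OF elim(3)] w0 by (intro mult_left_mono) auto
    also have "\<dots> < \<bar>\<psi> (Suc (Suc n))\<bar>" using elim(1) p1 by (simp add: abs_divide field_simps)
    finally show ?case .
  qed
  then show "\<forall>\<^sub>F n in sequentially. \<bar>\<psi> n\<bar> < \<bar>\<psi> (Suc n)\<bar>"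
    using eventually_sequentially_Suc[of "\<lambda>n. \<bar>\<psi> n\<bar> < \<bar>\<psi> (Suc n)\<bar>"] by simp
next
  fix C :: real assume C: "C > 0"
  define w where "w = \<bar>wronskian \<psi>m \<psi>\<bar>"
  have w0: "w > 0" using W_nonzero[OF sol ind] by (simp add: w_def)
  have L: "(\<lambda>n. \<bar>\<psi> (Suc n) / e n\<bar>) \<longlonglongrightarrow> w"
    unfolding w_def by (intro tendsto_rabs psi_next_lim[OF sol])
  have eva: "\<forall>\<^sub>F n in sequentially. w / 2 < \<bar>\<psi> (Suc n) / e n\<bar>"
    using order_tendstoD(1)[OF L, of "w/2"] w0 by simp
  have lim: "filterlim (\<lambda>n. (w / (2 * C)) * (e n / C ^ n)) at_top sequentially"
    by (rule filterlim_tendsto_pos_mult_at_top[OF tendsto_const _ e_over_pow[OF C]]) (use w0 C in simp)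
  have "filterlim (\<lambda>n. \<bar>\<psi> (Suc n)\<bar> / C ^ Suc n) at_top sequentially"
  proof (rule filterlim_at_top_mono[OF lim])
    show "\<forall>\<^sub>F n in sequentially. w / (2 * C) * (e n / C ^ n) \<le> \<bar>\<psi> (Suc n)\<bar> / C ^ Suc n"
      using eva
    proof eventually_elim
      case (elim n)
      have p: "e n > 0" "C ^ n > 0" using e_pos C by auto
      have "w / 2 * e n < \<bar>\<psi> (Suc n)\<bar>" using elim p by (simp add: abs_divide field_simps)
      then have "w / 2 * e n / (C * C ^ n) \<le> \<bar>\<psi> (Suc n)\<bar> / (C * C ^ n)"
        using p C by (intro divide_right_mono) auto
      then show ?case by (simp add: field_simps)
    qed
  qed
  then show "filterlim (\<lambda>n. \<bar>\<psi> n\<bar> / C ^ n) at_top sequentially"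
    using filterlim_sequentially_Suc[of "\<lambda>n. \<bar>\<psi> n\<bar> / C ^ n" at_top] by simp
next
  have eq: "(\<lambda>n. a powr (- (real n powr b)) * \<psi> n) = (\<lambda>n. \<psi> n / e n)"
    by (simp add: fun_eq_iff e_def powr_minus divide_inverse mult.commute)
  show "(\<lambda>n. a powr (- (real n powr b)) * \<psi> n) \<longlonglongrightarrow> 0"
    unfolding eq by (rule psi_e_lim[OF sol])
qed

end

theorem corollary3:
  fixes V \<psi>m :: "nat \<Rightarrow> real" and a b :: real
  assumes "a > 1" and "b > 1"
    and "is_solution V \<psi>m"
    and "(\<lambda>n. a powr (real n powr b) * \<psi>m n) \<longlonglongrightarrow> 1"
  shows
    "(\<forall>\<psi>. is_solution V \<psi> \<and>
          (\<forall>\<alpha> \<beta>. (\<forall>n. \<alpha> * \<psi> n + \<beta> * \<psi>m n = 0) \<longrightarrow> \<alpha> = 0 \<and> \<beta> = 0) \<longrightarrow>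
        (eventually (\<lambda>n. \<bar>\<psi> n\<bar> < \<bar>\<psi> (Suc n)\<bar>) sequentially) \<and>
        (\<forall>C>0. filterlim (\<lambda>n. \<bar>\<psi> n\<bar> / C ^ n) at_top sequentially) \<and>
        (\<lambda>n. a powr (- (real n powr b)) * \<psi> n) \<longlonglongrightarrow> 0)
     \<and> (\<forall>\<psi>. is_solution V \<psi> \<longrightarrow> (\<exists>B. \<forall>n. \<bar>\<psi> n * \<psi>m n\<bar> \<le> B))
     \<and> (\<forall>c d \<psi>p. (c, d) \<noteq> (0, 0) \<and> zero_notin_spectrum V c d \<and>
          is_solution V \<psi>p \<and> (\<exists>n. \<psi>p n \<noteq> 0) \<and> c * \<psi>p 1 + d * \<psi>p 2 = 0 \<longrightarrow>
          (\<exists>B. \<forall>m\<ge>1. \<forall>n\<ge>1. \<bar>green_matrix \<psi>p \<psi>m m n\<bar> \<le> B))"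
proof -
  interpret c3 V \<psi>m a b by unfold_locales (rule assms)+
  have P1: "\<forall>\<psi>. is_solution V \<psi> \<and>
          (\<forall>\<alpha> \<beta>. (\<forall>n. \<alpha> * \<psi> n + \<beta> * \<psi>m n = 0) \<longrightarrow> \<alpha> = 0 \<and> \<beta> = 0) \<longrightarrow>
        (eventually (\<lambda>n. \<bar>\<psi> n\<bar> < \<bar>\<psi> (Suc n)\<bar>) sequentially) \<and>
        (\<forall>C>0. filterlim (\<lambda>n. \<bar>\<psi> n\<bar> / C ^ n) at_top sequentially) \<and>
        (\<lambda>n. a powr (- (real n powr b)) * \<psi> n) \<longlonglongrightarrow> 0"
    using part_i by blast
  have P2: "\<forall>\<psi>. is_solution V \<psi> \<longrightarrow> (\<exists>B. \<forall>n. \<bar>\<psi> n * \<psi>m n\<bar> \<le> B)"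
  proof (intro allI impI)
    fix \<psi> assume "is_solution V \<psi>"
    then obtain K where "\<forall>i j. i \<le> j \<longrightarrow> \<bar>\<psi> i * \<psi>m j\<bar> \<le> K" using prod_bound by blast
    then show "\<exists>B. \<forall>n. \<bar>\<psi> n * \<psi>m n\<bar> \<le> B" by auto
  qed
  have P3: "\<forall>c d \<psi>p. (c, d) \<noteq> (0, 0) \<and> zero_notin_spectrum V c d \<and>
          is_solution V \<psi>p \<and> (\<exists>n. \<psi>p n \<noteq> 0) \<and> c * \<psi>p 1 + d * \<psi>p 2 = 0 \<longrightarrow>
          (\<exists>B. \<forall>m\<ge>1. \<forall>n\<ge>1. \<bar>green_matrix \<psi>p \<psi>m m n\<bar> \<le> B)"
  proof (intro allI impI)
    fix c d \<psi>p
    assume H: "(c, d) \<noteq> (0, 0) \<and> zero_notin_spectrum V c d \<and>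
          is_solution V \<psi>p \<and> (\<exists>n. \<psi>p n \<noteq> 0) \<and> c * \<psi>p 1 + d * \<psi>p 2 = 0"
    then obtain K where K: "\<forall>i j. i \<le> j \<longrightarrow> \<bar>\<psi>p i * \<psi>m j\<bar> \<le> K" using prod_bound by blast
    define W where "W = wronskian \<psi>m \<psi>p"
    have "\<bar>green_matrix \<psi>p \<psi>m m n\<bar> \<le> K / \<bar>W\<bar>" for m n
    proof -
      have "\<bar>\<psi>p (min m n) * \<psi>m (max m n)\<bar> \<le> K" using K by simp
      then have "\<bar>\<psi>p (min m n) * \<psi>m (max m n)\<bar> / \<bar>W\<bar> \<le> K / \<bar>W\<bar>"
        by (intro divide_right_mono) auto
      then show ?thesis by (simp add: green_matrix_def W_def abs_divide)
    qed
    then show "\<exists>B. \<forall>m\<ge>1. \<forall>n\<ge>1. \<bar>green_matrix \<psi>p \<psi>m m n\<bar> \<le> B" by blast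
  qed
  show ?thesis using P1 P2 P3 by blast
qed


end
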